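(* A finite triangle-free simple graph $G$ admits a two-acyclic factorization system if and only if its chromatic number satisfies $\chi(G)\le 3$.
   Context: Directed (multi)graphs are assumed to have a loop at every vertex. For a directed multigraph $(G,\to)$, form $G_A$ by relabelling arrows: an arrow $x\to y$ is of type $x\hookrightarrow y$ if for every $z$ with $z\to x$ there is an arrow $z\to y$; it is of type $x\twoheadrightarrow y$ if for every $z$ with $y\to z$ there is an arrow $x\to z$; if both hold it is counted as both types; otherwise it remains a plain arrow. $(G,\to)$ forms a two-acyclic factorization system if in $G_A$: (i) there are no $x\twoheadrightarrow y\twoheadrightarrow x$ and no $x\hookrightarrow y\hookrightarrow x$ with $x\ne y$; (ii) there is no $x\twoheadrightarrow y\hookrightarrow x$ with $x\neq y$; (iii) for every arrow $x\to z$ there exists $y$ with $x\twoheadrightarrow y\hookrightarrow z$. An undirected (multi)graph admits a two-acyclic factorization system if some orientation of its edges forms one. *)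

theory Defs
  imports Main
begin

definition simple_graph :: "'a set \<Rightarrow> ('a \<Rightarrow> 'a \<Rightarrow> bool) \<Rightarrow> bool" where
  "simple_graph V E \<longleftrightarrow> finite V \<and> (\<forall>x y. E x y \<longrightarrow> x \<in> V \<and> y \<in> V)
     \<and> (\<forall>x y. E x y \<longrightarrow> E y x) \<and> (\<forall>x. \<not> E x x)"

definition triangle_free :: "('a \<Rightarrow> 'a \<Rightarrow> bool) \<Rightarrow> bool" where
  "triangle_free E \<longleftrightarrow> \<not> (\<exists>x y z. E x y \<and> E y z \<and> E x z)"

definition colourable :: "'a set \<Rightarrow> ('a \<Rightarrow> 'a \<Rightarrow> bool) \<Rightarrow> nat \<Rightarrow> bool" where
  "colourable V E k \<longleftrightarrow> (\<exists>c :: 'a \<Rightarrow> nat. (\<forall>x\<in>V. c x < k) \<and> (\<forall>x y. E x y \<longrightarrow> c x \<noteq> c y))"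

definition chromatic_number :: "'a set \<Rightarrow> ('a \<Rightarrow> 'a \<Rightarrow> bool) \<Rightarrow> nat" where
  "chromatic_number V E = (LEAST k. colourable V E k)"

definition orientation :: "('a \<Rightarrow> 'a \<Rightarrow> bool) \<Rightarrow> ('a \<Rightarrow> 'a \<Rightarrow> bool) \<Rightarrow> bool" where
  "orientation E D \<longleftrightarrow> (\<forall>x y. D x y \<longrightarrow> E x y) \<and> (\<forall>x y. E x y \<longrightarrow> (D x y \<longleftrightarrow> \<not> D y x))"

definition with_loops :: "('a \<Rightarrow> 'a \<Rightarrow> bool) \<Rightarrow> 'a \<Rightarrow> 'a \<Rightarrow> bool" where
  "with_loops D x y \<longleftrightarrow> x = y \<or> D x y"

definition mono_arrow :: "'a set \<Rightarrow> ('a \<Rightarrow> 'a \<Rightarrow> bool) \<Rightarrow> 'a \<Rightarrow> 'a \<Rightarrow> bool" where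
  "mono_arrow V A x y \<longleftrightarrow> A x y \<and> (\<forall>z\<in>V. A z x \<longrightarrow> A z y)"

definition epi_arrow :: "'a set \<Rightarrow> ('a \<Rightarrow> 'a \<Rightarrow> bool) \<Rightarrow> 'a \<Rightarrow> 'a \<Rightarrow> bool" where
  "epi_arrow V A x y \<longleftrightarrow> A x y \<and> (\<forall>z\<in>V. A y z \<longrightarrow> A x z)"

definition two_acyclic_fs :: "'a set \<Rightarrow> ('a \<Rightarrow> 'a \<Rightarrow> bool) \<Rightarrow> bool" where
  "two_acyclic_fs V A \<longleftrightarrow>
     (\<forall>x\<in>V. \<forall>y\<in>V. epi_arrow V A x y \<and> epi_arrow V A y x \<longrightarrow> x = y)
   \<and> (\<forall>x\<in>V. \<forall>y\<in>V. mono_arrow V A x y \<and> mono_arrow V A y x \<longrightarrow> x = y)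
   \<and> (\<forall>x\<in>V. \<forall>y\<in>V. epi_arrow V A x y \<and> mono_arrow V A y x \<longrightarrow> x = y)
   \<and> (\<forall>x\<in>V. \<forall>z\<in>V. A x z \<longrightarrow> (\<exists>y\<in>V. epi_arrow V A x y \<and> mono_arrow V A y z))"

definition admits_two_acyclic_fs :: "'a set \<Rightarrow> ('a \<Rightarrow> 'a \<Rightarrow> bool) \<Rightarrow> bool" where
  "admits_two_acyclic_fs V E \<longleftrightarrow> (\<exists>D. orientation E D \<and> two_acyclic_fs V (with_loops D))"

end

theory Submission
  imports Defs
begin

lemma key:
  assumes sg: "simple_graph V E" and tf: "triangle_free E" and o: "orientation E D"
  shows "two_acyclic_fs V (with_loops D) \<longleftrightarrow>
     (\<forall>x z. D x z \<longrightarrow> (\<forall>w. \<not> D w x) \<or> (\<forall>w. \<not> D z w))"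
proof -
  have DE: "\<And>x y. D x y \<Longrightarrow> E x y" using o unfolding orientation_def by blast
  have anti: "\<And>x y. D x y \<Longrightarrow> \<not> D y x" using o unfolding orientation_def by blast
  have irr: "\<And>x. \<not> D x x" using DE sg unfolding simple_graph_def by blast
  have inV1: "\<And>x y. D x y \<Longrightarrow> x \<in> V" using DE sg unfolding simple_graph_def by blast
  have inV2: "\<And>x y. D x y \<Longrightarrow> y \<in> V" using DE sg unfolding simple_graph_def by blast
  have tri: "\<And>x y z. D x y \<Longrightarrow> D y z \<Longrightarrow> D x z \<Longrightarrow> False"
  proof -
    fix x y z assume "D x y" "D y z" "D x z"
    then have "E x y" "E y z" "E x z" using DE by auto
    then show False using tf unfolding triangle_free_def by blast
  qed
  let ?A = "with_loops D"
  have epiD: "\<And>x y w. epi_arrow V ?A x y \<Longrightarrow> D y w \<Longrightarrow> x = w \<or> D x w"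
  proof -
    fix x y w assume "epi_arrow V ?A x y" "D y w"
    then have "?A y w" "w \<in> V" using inV2 unfolding with_loops_def by auto
    then show "x = w \<or> D x w" using \<open>epi_arrow V ?A x y\<close> unfolding epi_arrow_def with_loops_def by blast
  qed
  have monoD: "\<And>x y w. mono_arrow V ?A x y \<Longrightarrow> D w x \<Longrightarrow> w = y \<or> D w y"
  proof -
    fix x y w assume "mono_arrow V ?A x y" "D w x"
    then have "?A w x" "w \<in> V" using inV1 unfolding with_loops_def by auto
    then show "w = y \<or> D w y" using \<open>mono_arrow V ?A x y\<close> unfolding mono_arrow_def with_loops_def by blast
  qed
  have arr: "\<And>x y. epi_arrow V ?A x y \<Longrightarrow> x = y \<or> D x y" "\<And>x y. mono_arrow V ?A x y \<Longrightarrow> x = y \<or> D x y"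
    unfolding epi_arrow_def mono_arrow_def with_loops_def by auto
  show ?thesis
  proof
    assume H: "two_acyclic_fs V (with_loops D)"
    show "\<forall>x z. D x z \<longrightarrow> (\<forall>w. \<not> D w x) \<or> (\<forall>w. \<not> D z w)"
    proof (intro allI impI)
      fix x z assume xz: "D x z"
      have "x \<in> V" "z \<in> V" "?A x z" using xz inV1 inV2 unfolding with_loops_def by auto
      then obtain y where y: "y \<in> V" "epi_arrow V ?A x y" "mono_arrow V ?A y z"
        using H unfolding two_acyclic_fs_def by blast
      show "(\<forall>w. \<not> D w x) \<or> (\<forall>w. \<not> D z w)"
      proof (cases "y = x")
        case True
        have "\<forall>w. \<not> D w x"
        proof (intro allI notI)
          fix w assume wx: "D w x"
          then have "w = z \<or> D w z" using monoD y(3) True by blast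
          then show False using wx xz anti tri by blast
        qed
        then show ?thesis by blast
      next
        case F1: False
        show ?thesis
        proof (cases "y = z")
          case True
          have "\<forall>w. \<not> D z w"
          proof (intro allI notI)
            fix w assume zw: "D z w"
            then have "x = w \<or> D x w" using epiD y(2) True by blast
            then show False using zw xz anti tri by blast
          qed
          then show ?thesis by blast
        next
          case False
          have xy: "D x y" using arr(1)[OF y(2)] F1 by auto
          have yz: "D y z" using arr(2)[OF y(3)] False by auto
          have "x = z \<or> D x z" using epiD[OF y(2) yz] .
          then show ?thesis using xy yz anti tri by blast
        qed
      qed
    qed
  next
    assume H: "\<forall>x z. D x z \<longrightarrow> (\<forall>w. \<not> D w x) \<or> (\<forall>w. \<not> D z w)"
    have refl_em: "\<And>x. epi_arrow V ?A x x \<and> mono_arrow V ?A x x"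
      unfolding epi_arrow_def mono_arrow_def with_loops_def by simp
    have 4: "\<forall>x\<in>V. \<forall>z\<in>V. ?A x z \<longrightarrow> (\<exists>y\<in>V. epi_arrow V ?A x y \<and> mono_arrow V ?A y z)"
    proof (intro ballI impI)
      fix x z assume xV: "x \<in> V" and zV: "z \<in> V" and A: "?A x z"
      show "\<exists>y\<in>V. epi_arrow V ?A x y \<and> mono_arrow V ?A y z"
      proof (cases "x = z")
        case True then show ?thesis using xV refl_em by blast
      next
        case False
        then have xz: "D x z" using A unfolding with_loops_def by blast
        then consider "\<forall>w. \<not> D w x" | "\<forall>w. \<not> D z w" using H by blast
        then show ?thesis
        proof cases
          case 1
          then have "mono_arrow V ?A x z" using xz unfolding mono_arrow_def with_loops_def by auto
          then show ?thesis using xV refl_em by blast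
        next
          case 2
          then have "epi_arrow V ?A x z" using xz unfolding epi_arrow_def with_loops_def by auto
          then show ?thesis using zV refl_em by blast
        qed
      qed
    qed
    have c1: "\<And>x y. epi_arrow V ?A x y \<Longrightarrow> epi_arrow V ?A y x \<Longrightarrow> x = y"
      using arr anti by blast
    have c2: "\<And>x y. mono_arrow V ?A x y \<Longrightarrow> mono_arrow V ?A y x \<Longrightarrow> x = y"
      using arr anti by blast
    have c3: "\<And>x y. epi_arrow V ?A x y \<Longrightarrow> mono_arrow V ?A y x \<Longrightarrow> x = y"
      using arr anti by blast
    show "two_acyclic_fs V (with_loops D)"
      unfolding two_acyclic_fs_def using 4 c1 c2 c3 by blast
  qed
qed
lemma chrom3:
  assumes sg: "simple_graph V E"
  shows "chromatic_number V E \<le> 3 \<longleftrightarrow> colourable V E 3"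
proof
  assume "colourable V E 3"
  then show "chromatic_number V E \<le> 3" unfolding chromatic_number_def by (rule Least_le)
next
  assume le: "chromatic_number V E \<le> 3"
  have fin: "finite V" using sg unfolding simple_graph_def by blast
  then obtain f :: "'a \<Rightarrow> nat" where f: "bij_betw f V {0..<card V}"
    using ex_bij_betw_finite_nat by blast
  have "colourable V E (card V)"
    unfolding colourable_def
  proof (intro exI conjI allI impI)
    show "\<forall>x\<in>V. f x < card V" using f bij_betwE by fastforce
    fix x y assume "E x y"
    then have "x \<in> V" "y \<in> V" "x \<noteq> y" using sg unfolding simple_graph_def by auto
    then show "f x \<noteq> f y" using f unfolding bij_betw_def inj_on_def by blast
  qed
  then have "colourable V E (chromatic_number V E)" unfolding chromatic_number_def by (rule LeastI)
  then obtain c :: "'a \<Rightarrow> nat" where c: "\<forall>x\<in>V. c x < chromatic_number V E" "\<forall>x y. E x y \<longrightarrow> c x \<noteq> c y"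
    unfolding colourable_def by blast
  have "\<forall>x\<in>V. c x < 3" using c(1) le by (meson order_less_le_trans)
  then show "colourable V E 3" using c(2) unfolding colourable_def by blast
qed

theorem proposition3p41:
  fixes V :: "'a set" and E :: "'a \<Rightarrow> 'a \<Rightarrow> bool"
  assumes "simple_graph V E" and "triangle_free E"
  shows "admits_two_acyclic_fs V E \<longleftrightarrow> chromatic_number V E \<le> 3"
proof -
  have sym: "\<And>x y. E x y \<Longrightarrow> E y x" and inV: "\<And>x y. E x y \<Longrightarrow> x \<in> V \<and> y \<in> V"
    and irr: "\<And>x. \<not> E x x"
    using assms(1) unfolding simple_graph_def by blast+
  have "admits_two_acyclic_fs V E \<longleftrightarrow> colourable V E 3"
  proof
    assume "admits_two_acyclic_fs V E"
    then obtain D where o: "orientation E D" and t: "two_acyclic_fs V (with_loops D)"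
      unfolding admits_two_acyclic_fs_def by blast
    have H: "\<forall>x z. D x z \<longrightarrow> (\<forall>w. \<not> D w x) \<or> (\<forall>w. \<not> D z w)"
      using key[OF assms o] t by blast
    have DE: "\<And>x y. D x y \<Longrightarrow> E x y" and ED: "\<And>x y. E x y \<Longrightarrow> D x y \<or> D y x"
      using o unfolding orientation_def by blast+
    define c where "c x = (if \<forall>w. \<not> D w x then 0 else if \<forall>w. \<not> D x w then 1 else (2::nat))" for x
    show "colourable V E 3" unfolding colourable_def
    proof (intro exI[of _ c] conjI allI impI)
      show "\<forall>x\<in>V. c x < 3" unfolding c_def by simp
      fix x y assume "E x y"
      then consider "D x y" | "D y x" using ED by blast
      then show "c x \<noteq> c y"
      proof cases
        case 1 then show ?thesis using H unfolding c_def by (auto split: if_splits)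
      next
        case 2 then show ?thesis using H unfolding c_def by (auto split: if_splits)
      qed
    qed
  next
    assume "colourable V E 3"
    then obtain c :: "'a \<Rightarrow> nat" where c: "\<forall>x\<in>V. c x < 3" "\<forall>x y. E x y \<longrightarrow> c x \<noteq> c y"
      unfolding colourable_def by blast
    define r :: "nat \<Rightarrow> nat" where "r k = (if k = 0 then 0 else if k = 2 then 1 else 2)" for k
    define D where "D x y = (E x y \<and> r (c x) < r (c y))" for x y
    have rinj: "\<And>a b. a < 3 \<Longrightarrow> b < 3 \<Longrightarrow> a \<noteq> b \<Longrightarrow> r a \<noteq> r b" unfolding r_def by auto
    have o: "orientation E D" unfolding orientation_def D_def
    proof (intro conjI allI impI)
      fix x y assume e: "E x y"
      then have "r (c x) \<noteq> r (c y)" using rinj c inV by blast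
      then show "(E x y \<and> r (c x) < r (c y)) = (\<not> (E y x \<and> r (c y) < r (c x)))"
        using e sym by auto
    qed simp
    have H: "\<forall>x z. D x z \<longrightarrow> (\<forall>w. \<not> D w x) \<or> (\<forall>w. \<not> D z w)"
    proof (intro allI impI)
      fix x z assume "D x z"
      then have "c x < 3" "c z < 3" "r (c x) < r (c z)" using inV c unfolding D_def by auto
      then have "r (c x) = 0 \<or> r (c z) = 2" unfolding r_def by (auto split: if_splits)
      moreover have "\<And>w. D w x \<Longrightarrow> r (c x) \<noteq> 0" "\<And>w. D z w \<Longrightarrow> r (c z) \<noteq> 2"
        unfolding D_def r_def by (auto split: if_splits)
      ultimately show "(\<forall>w. \<not> D w x) \<or> (\<forall>w. \<not> D z w)" by blast
    qed
    show "admits_two_acyclic_fs V E" unfolding admits_two_acyclic_fs_def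
      using key[OF assms o] H o by blast
  qed
  then show ?thesis using chrom3[OF assms(1)] by simp
qed

end
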